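(* $s_{\mathbf A_R}=s_\Gamma$.
   Context: Let $\mathbf A_R=\{A_1,A_2,A_3\}$ with $A_1=\begin{pmatrix}1&1&1\\0&1&0\\0&0&1\end{pmatrix}$, $A_2=\begin{pmatrix}1&0&0\\1&1&1\\0&0&1\end{pmatrix}$, $A_3=\begin{pmatrix}1&0&0\\0&1&0\\1&1&1\end{pmatrix}$, and $\Gamma=\{A_i^nA_j: i\ne j\in\{1,2,3\},\ n\ge1\}$. For singular values $\alpha_1\ge\alpha_2\ge\alpha_3$ and $s\ge0$: $\phi^s(A)=(\alpha_2/\alpha_1)^s$ for $0\le s\le1$; $\frac{\alpha_2}{\alpha_1}(\frac{\alpha_3}{\alpha_1})^{s-1}$ for $1\le s\le2$; $(\frac{\alpha_2\alpha_3}{\alpha_1^2})^s$ for $s\ge2$. For a finite or countable set $\mathbf A$ of matrices, $\zeta_{\mathbf A}(s)=\sum_{n\ge1}\sum\phi^s(B_1\cdots B_n)$ over all words $(B_1,\dots,B_n)\in\mathbf A^n$, and $s_{\mathbf A}=\inf\{s\ge0:\zeta_{\mathbf A}(s)<\infty\}$. *)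

theory Defs
  imports "HOL-Analysis.Analysis"
begin

type_synonym mat3 = "real^3^3"

definition diag3 :: "real \<Rightarrow> real \<Rightarrow> real \<Rightarrow> mat3" where
  "diag3 a b c = (\<chi> i j. if i = j then (if i = 1 then a else if i = 2 then b else c) else 0)"

definition sing_vals :: "mat3 \<Rightarrow> real \<times> real \<times> real" where
  "sing_vals A = (SOME (a1, a2, a3). a1 \<ge> a2 \<and> a2 \<ge> a3 \<and> a3 \<ge> 0 \<and>
      (\<exists>U V. orthogonal_matrix U \<and> orthogonal_matrix V \<and> A = U ** diag3 a1 a2 a3 ** V))"

definition phi :: "real \<Rightarrow> mat3 \<Rightarrow> real" where
  "phi s A = (case sing_vals A of (a1, a2, a3) \<Rightarrow>
      if s \<le> 1 then (a2 / a1) powr s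
      else if s \<le> 2 then (a2 / a1) * (a3 / a1) powr (s - 1)
      else (a2 * a3 / a1\<^sup>2) powr s)"

definition word_prod :: "mat3 list \<Rightarrow> mat3" where
  "word_prod ws = foldr (**) ws (mat 1)"

definition zeta :: "mat3 set \<Rightarrow> real \<Rightarrow> ennreal" where
  "zeta \<A> s = (\<Sum>n. infsum (\<lambda>ws. ennreal (phi s (word_prod ws)))
                    {ws. length ws = Suc n \<and> set ws \<subseteq> \<A>})"

definition crit_exp :: "mat3 set \<Rightarrow> ereal" where
  "crit_exp \<A> = Inf {ereal s | s. s \<ge> 0 \<and> zeta \<A> s < \<infinity>}"

definition mpow :: "mat3 \<Rightarrow> nat \<Rightarrow> mat3" where
  "mpow A n = ((\<lambda>B. A ** B) ^^ n) (mat 1)"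

definition A1 :: mat3 where
  "A1 = vector [vector [1,1,1], vector [0,1,0], vector [0,0,1]]"
definition A2 :: mat3 where
  "A2 = vector [vector [1,0,0], vector [1,1,1], vector [0,0,1]]"
definition A3 :: mat3 where
  "A3 = vector [vector [1,0,0], vector [0,1,0], vector [1,1,1]]"

definition Amat :: "nat \<Rightarrow> mat3" where
  "Amat i = (if i = 1 then A1 else if i = 2 then A2 else A3)"

definition A_R :: "mat3 set" where
  "A_R = {A1, A2, A3}"

definition Gamma :: "mat3 set" where
  "Gamma = {mpow (Amat i) n ** Amat j | i j n.
              i \<in> {1,2,3} \<and> j \<in> {1,2,3} \<and> i \<noteq> j \<and> n \<ge> 1}"

end

theory Submission
  imports Defs "HOL-Analysis.Cross3"
begin

lemma mpow_Suc: "mpow A (Suc n) = A ** mpow A n"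
  by (simp add: mpow_def)

lemma mpow_0: "mpow A 0 = mat 1"
  by (simp add: mpow_def)

definition M1 :: "real \<Rightarrow> mat3" where
  "M1 n = vector [vector [1,n,n], vector [0,1,0], vector [0,0,1]]"
definition M2 :: "real \<Rightarrow> mat3" where
  "M2 n = vector [vector [1,0,0], vector [n,1,n], vector [0,0,1]]"
definition M3 :: "real \<Rightarrow> mat3" where
  "M3 n = vector [vector [1,0,0], vector [0,1,0], vector [n,n,1]]"

lemma mat1_3: "(mat 1 :: mat3) = vector [vector [1,0,0], vector [0,1,0], vector [0,0,1]]"
  by (simp add: vec_eq_iff forall_3 mat_def)

lemma mpow_A1: "mpow A1 n = M1 (real n)"
  by (induction n) (simp_all add: mpow_0 mpow_Suc mat1_3 M1_def A1_def vec_eq_iff forall_3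
       matrix_matrix_mult_def sum_3 algebra_simps)

lemma mpow_A2: "mpow A2 n = M2 (real n)"
  by (induction n) (simp_all add: mpow_0 mpow_Suc mat1_3 M2_def A2_def vec_eq_iff forall_3
       matrix_matrix_mult_def sum_3 algebra_simps)

lemma mpow_A3: "mpow A3 n = M3 (real n)"
  by (induction n) (simp_all add: mpow_0 mpow_Suc mat1_3 M3_def A3_def vec_eq_iff forall_3
       matrix_matrix_mult_def sum_3 algebra_simps)

definition Mt :: "nat \<times> nat \<times> nat \<Rightarrow> mat3" where
  "Mt t = (case t of (i,j,n) \<Rightarrow> mpow (Amat i) n ** Amat j)"

definition T :: "(nat \<times> nat \<times> nat) set" where
  "T = {(i,j,n). i \<in> {1,2,3} \<and> j \<in> {1,2,3} \<and> i \<noteq> j \<and> n \<ge> 1}"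

lemma Gamma_eq: "Gamma = Mt ` T"
  unfolding Gamma_def Mt_def T_def by (auto simp: image_def)

lemma Mt12: "Mt (1,2,n) = vector [vector [1+real n, real n, 2*real n], vector [1,1,1], vector [0,0,1]]"
  by (simp add: Mt_def Amat_def mpow_A1 M1_def A2_def vec_eq_iff forall_3 matrix_matrix_mult_def sum_3)
lemma Mt13: "Mt (1,3,n) = vector [vector [1+real n, 2*real n, real n], vector [0,1,0], vector [1,1,1]]"
  by (simp add: Mt_def Amat_def mpow_A1 M1_def A3_def vec_eq_iff forall_3 matrix_matrix_mult_def sum_3)
lemma Mt21: "Mt (2,1,n) = vector [vector [1,1,1], vector [real n, real n+1, 2*real n], vector [0,0,1]]"
  by (simp add: Mt_def Amat_def mpow_A2 M2_def A1_def vec_eq_iff forall_3 matrix_matrix_mult_def sum_3)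
lemma Mt23: "Mt (2,3,n) = vector [vector [1,0,0], vector [2*real n, 1+real n, real n], vector [1,1,1]]"
  by (simp add: Mt_def Amat_def mpow_A2 M2_def A3_def vec_eq_iff forall_3 matrix_matrix_mult_def sum_3)
lemma Mt31: "Mt (3,1,n) = vector [vector [1,1,1], vector [0,1,0], vector [real n, 2*real n, real n+1]]"
  by (simp add: Mt_def Amat_def mpow_A3 M3_def A1_def vec_eq_iff forall_3 matrix_matrix_mult_def sum_3)
lemma Mt32: "Mt (3,2,n) = vector [vector [1,0,0], vector [1,1,1], vector [2*real n, real n, real n+1]]"
  by (simp add: Mt_def Amat_def mpow_A3 M3_def A2_def vec_eq_iff forall_3 matrix_matrix_mult_def sum_3)

definition Rec :: "mat3 \<Rightarrow> nat \<times> nat \<times> nat" where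
  "Rec M = (if M$1$1 \<noteq> 1 then 1 else if M$2$2 \<noteq> 1 then 2 else 3,
            if M$1$1 = 1 \<and> M$1$2 = 1 \<and> M$1$3 = 1 then 1
                     else if M$2$1 = 1 \<and> M$2$2 = 1 \<and> M$2$3 = 1 then 2 else 3,
            nat \<lfloor>(if M$1$1 \<noteq> 1 then M$1$1 else if M$2$2 \<noteq> 1 then M$2$2 else M$3$3)\<rfloor> - 1)"

lemma Rec12: "n \<ge> 1 \<Longrightarrow> Rec (Mt (1,2,n)) = (1,2,n)"
  unfolding Mt12 Rec_def by simp linarith?
lemma Rec13: "n \<ge> 1 \<Longrightarrow> Rec (Mt (1,3,n)) = (1,3,n)"
  unfolding Mt13 Rec_def by simp linarith?
lemma Rec21: "n \<ge> 1 \<Longrightarrow> Rec (Mt (2,1,n)) = (2,1,n)"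
  unfolding Mt21 Rec_def by simp linarith?
lemma Rec23: "n \<ge> 1 \<Longrightarrow> Rec (Mt (2,3,n)) = (2,3,n)"
  unfolding Mt23 Rec_def by simp linarith?
lemma Rec31: "n \<ge> 1 \<Longrightarrow> Rec (Mt (3,1,n)) = (3,1,n)"
  unfolding Mt31 Rec_def by simp linarith?
lemma Rec32: "n \<ge> 1 \<Longrightarrow> Rec (Mt (3,2,n)) = (3,2,n)"
  unfolding Mt32 Rec_def by simp linarith?

lemma Rec_Mt: "t \<in> T \<Longrightarrow> Rec (Mt t) = t"
  unfolding T_def using Rec12 Rec13 Rec21 Rec23 Rec31 Rec32 by auto

lemma Mt_inj: "inj_on Mt T"
  by (metis Rec_Mt inj_onI)

lemma lag:
  fixes A :: mat3 and v w :: "real^3"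
  assumes nv: "norm v = 1" and vw: "v \<bullet> w = 0"
    and le: "\<And>t. norm (A *v (v + t *\<^sub>R w)) \<le> norm (A *v v) * norm (v + t *\<^sub>R w)"
  shows "(A *v v) \<bullet> (A *v w) = 0"
proof -
  define a where "a = A *v v"
  define b where "b = A *v w"
  define p where "p = a \<bullet> b"
  define c where "c = (a \<bullet> a) * (w \<bullet> w) - b \<bullet> b"
  have key: "2 * t * p \<le> t^2 * c" for t
  proof -
    have e1: "A *v (v + t *\<^sub>R w) = a + t *\<^sub>R b"
      by (simp add: a_def b_def matrix_vector_right_distrib matrix_vector_mult_scaleR)
    have e2: "norm (v + t *\<^sub>R w) ^2 = 1 + t^2 * (w \<bullet> w)"
    proof -
      have vv: "v \<bullet> v = 1" using nv by (simp add: norm_eq_1)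
      have wv: "w \<bullet> v = 0" using vw by (simp add: inner_commute)
      show ?thesis unfolding power2_norm_eq_inner
        by (simp add: inner_add_left inner_add_right vv vw wv power2_eq_square)
    qed
    have "norm (a + t *\<^sub>R b) ^2 \<le> (norm a * norm (v + t *\<^sub>R w))^2"
      using le[of t] e1 by (simp add: a_def power_mono)
    also have "\<dots> = (a \<bullet> a) * (1 + t^2 * (w \<bullet> w))"
      by (simp only: power_mult_distrib e2) (simp add: power2_norm_eq_inner)
    finally have "(a + t *\<^sub>R b) \<bullet> (a + t *\<^sub>R b) \<le> (a \<bullet> a) * (1 + t^2 * (w \<bullet> w))"
      by (simp add: power2_norm_eq_inner)
    then show ?thesis
      by (simp add: inner_add_left inner_add_right inner_commute c_def p_def algebra_simps power2_eq_square)
  qed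
  define k where "k = 1 / (\<bar>c\<bar> + 1)"
  have k0: "k > 0" by (simp add: k_def add_pos_nonneg)
  have kc: "k * c < 1"
  proof -
    have "k * c \<le> k * \<bar>c\<bar>" using k0 by (simp add: mult_left_mono)
    also have "\<dots> < 1" by (simp add: k_def)
    finally show ?thesis .
  qed
  have "2 * (p * k) * p \<le> (p * k)^2 * c" using key[of "p*k"] .
  then have "(p^2 * k) * (2 - k * c) \<le> 0" by (simp add: algebra_simps power2_eq_square)
  moreover have "2 - k * c > 0" using kc by simp
  ultimately have "p^2 * k \<le> 0" by (simp add: mult_le_0_iff)
  then have "p = 0" using k0 by (simp add: mult_le_0_iff)
  then show ?thesis by (simp add: p_def a_def b_def)
qed


lemma max_on:
  fixes A :: mat3 and S :: "(real^3) set"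
  assumes "compact S" "S \<noteq> {}"
  obtains v where "v \<in> S" "\<And>x. x \<in> S \<Longrightarrow> norm (A *v x) \<le> norm (A *v v)"
proof -
  have "continuous_on S (\<lambda>x. norm (A *v x))"
    by (intro continuous_intros)
  then show ?thesis using continuous_attains_sup[OF assms] that by blast
qed

lemma hom_bound:
  fixes A :: mat3
  assumes "\<And>x. norm x = 1 \<Longrightarrow> P x \<Longrightarrow> norm (A *v x) \<le> c"
    and "\<And>x r. P x \<Longrightarrow> P (r *\<^sub>R x)" and "c \<ge> 0"
    and "P x"
  shows "norm (A *v x) \<le> c * norm x"
proof (cases "x = 0")
  case True then show ?thesis by simp
next
  case False
  define y where "y = (1 / norm x) *\<^sub>R x"
  have "norm y = 1" using False by (simp add: y_def)
  moreover have "P y" using assms(2,4) by (simp add: y_def)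
  ultimately have "norm (A *v y) \<le> c" using assms(1) by blast
  moreover have "A *v y = (1 / norm x) *\<^sub>R (A *v x)" by (simp add: y_def matrix_vector_mult_scaleR)
  ultimately have "norm (A *v x) / norm x \<le> c" by simp
  then show ?thesis using False by (simp add: divide_le_eq mult.commute)
qed

lemma diag3_entries: "diag3 a b c $ i $ j = (if i = j then (if i = 1 then a else if i = 2 then b else c) else 0)"
  by (simp add: diag3_def)

lemma svd_exists:
  fixes A :: mat3
  assumes dA: "det A \<noteq> 0"
  shows "\<exists>a1 a2 a3. a1 \<ge> a2 \<and> a2 \<ge> a3 \<and> a3 \<ge> 0 \<and>
      (\<exists>U V. orthogonal_matrix U \<and> orthogonal_matrix V \<and> A = U ** diag3 a1 a2 a3 ** V)"
proof -
  obtain v1 where v1S: "v1 \<in> sphere 0 1" and v1m: "\<And>x. x \<in> sphere 0 1 \<Longrightarrow> norm (A *v x) \<le> norm (A *v v1)"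
    using max_on[of "sphere (0::real^3) 1" A] by auto
  have nv1: "norm v1 = 1" using v1S by simp
  have hom1: "norm (A *v x) \<le> norm (A *v v1) * norm x" for x
    by (rule hom_bound[where P="\<lambda>_. True"]) (use v1m in auto)
  define S2 where "S2 = sphere (0::real^3) 1 \<inter> {x. v1 \<bullet> x = 0}"
  have cS2: "compact S2" unfolding S2_def
    by (intro compact_Int_closed compact_sphere closed_hyperplane)
  obtain y where y: "y \<noteq> 0" "orthogonal v1 y"
    using orthogonal_to_vector_exists[of v1] by auto
  have "(1 / norm y) *\<^sub>R y \<in> S2" using y by (simp add: S2_def orthogonal_def)
  then have neS2: "S2 \<noteq> {}" by auto
  obtain v2 where v2S: "v2 \<in> S2" and v2m: "\<And>x. x \<in> S2 \<Longrightarrow> norm (A *v x) \<le> norm (A *v v2)"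
    using max_on[OF cS2 neS2, of A] by auto
  have nv2: "norm v2 = 1" and v12: "v1 \<bullet> v2 = 0" using v2S by (auto simp: S2_def)
  have hom2: "v1 \<bullet> x = 0 \<Longrightarrow> norm (A *v x) \<le> norm (A *v v2) * norm x" for x
    by (rule hom_bound[where P="\<lambda>x. v1 \<bullet> x = 0"]) (use v2m in \<open>auto simp: S2_def\<close>)
  define v3 where "v3 = cross3 v1 v2"
  have v13: "v1 \<bullet> v3 = 0" and v23: "v2 \<bullet> v3 = 0" unfolding v3_def using dot_cross_self by auto
  have nv3: "norm v3 = 1"
  proof -
    have "(norm v3)^2 = 1" unfolding v3_def using norm_cross[of v1 v2] nv1 nv2 v12 by simp
    moreover have "norm v3 \<ge> 0" by simp
    ultimately show ?thesis by (smt (verit) power2_eq_1_iff)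
  qed
  have o12: "(A *v v1) \<bullet> (A *v v2) = 0"
    by (rule lag[OF nv1 v12]) (use hom1 in auto)
  have o13: "(A *v v1) \<bullet> (A *v v3) = 0"
    by (rule lag[OF nv1 v13]) (use hom1 in auto)
  have o23: "(A *v v2) \<bullet> (A *v v3) = 0"
  proof (rule lag[OF nv2 v23])
    fix t
    have "v1 \<bullet> (v2 + t *\<^sub>R v3) = 0" using v12 v13 by (simp add: inner_add_right)
    then show "norm (A *v (v2 + t *\<^sub>R v3)) \<le> norm (A *v v2) * norm (v2 + t *\<^sub>R v3)" by (rule hom2)
  qed
  define a1 where "a1 = norm (A *v v1)"
  define a2 where "a2 = norm (A *v v2)"
  define a3 where "a3 = norm (A *v v3)"
  have a12: "a1 \<ge> a2" using hom1[of v2] nv2 by (simp add: a1_def a2_def)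
  have a23: "a2 \<ge> a3" using hom2[OF v13] nv3 by (simp add: a3_def a2_def)
  have invA: "A *v x = 0 \<Longrightarrow> x = 0" for x
    using dA invertible_det_nz[of A] by (metis invertible_left_inverse matrix_vector_mul_assoc matrix_vector_mul_lid matrix_vector_mult_0_right)
  have a3p: "a3 > 0" unfolding a3_def using nv3 invA by fastforce
  have a1p: "a1 > 0" and a2p: "a2 > 0" using a12 a23 a3p by linarith+
  define u1 where "u1 = (1/a1) *\<^sub>R (A *v v1)"
  define u2 where "u2 = (1/a2) *\<^sub>R (A *v v2)"
  define u3 where "u3 = (1/a3) *\<^sub>R (A *v v3)"
  define V :: mat3 where "V = vector [v1, v2, v3]"
  define W :: mat3 where "W = vector [u1, u2, u3]"
  define U where "U = transpose W"
  have rowV: "row i V = V $ i" for i by (simp add: row_def)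
  have rowW: "row i W = W $ i" for i by (simp add: row_def)
  have oV: "orthogonal_matrix V"
    unfolding orthogonal_matrix_orthonormal_rows rowV
    using nv1 nv2 nv3 v12 v13 v23
    by (auto simp: V_def forall_3 orthogonal_def inner_commute)
  have nu: "norm u1 = 1" "norm u2 = 1" "norm u3 = 1"
    using a1p a2p a3p by (auto simp: u1_def u2_def u3_def a1_def a2_def a3_def)
  have ou: "u1 \<bullet> u2 = 0" "u1 \<bullet> u3 = 0" "u2 \<bullet> u3 = 0"
    using o12 o13 o23 by (auto simp: u1_def u2_def u3_def)
  have oW: "orthogonal_matrix W"
    unfolding orthogonal_matrix_orthonormal_rows rowW
    using nu ou by (auto simp: W_def forall_3 orthogonal_def inner_commute)
  have oU: "orthogonal_matrix U" using oW by (simp add: U_def)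
  have Av: "A *v v1 = a1 *\<^sub>R u1" "A *v v2 = a2 *\<^sub>R u2" "A *v v3 = a3 *\<^sub>R u3"
    using a1p a2p a3p by (auto simp: u1_def u2_def u3_def)
  have UD: "U ** diag3 a1 a2 a3 = A ** transpose V"
  proof -
    have "(A ** transpose V) $ k $ i = (A *v (V $ i)) $ k" for k i
      by (simp add: matrix_matrix_mult_def matrix_vector_mult_def transpose_def)
    moreover have "(U ** diag3 a1 a2 a3) $ k $ i = (A *v (V $ i)) $ k" for k i
      using exhaust_3[of i]
      by (auto simp: matrix_matrix_mult_def sum_3 diag3_def U_def W_def V_def transpose_def Av)
    ultimately show ?thesis by (simp add: vec_eq_iff)
  qed
  have "U ** diag3 a1 a2 a3 ** V = A"
    using oV unfolding UD orthogonal_matrix_def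
    by (metis matrix_mul_assoc matrix_mul_rid)
  then show ?thesis using a12 a23 a3p oU oV by (intro exI[of _ a1] exI[of _ a2] exI[of _ a3]) auto
qed

lemma diag_norm2:
  "(norm (diag3 a1 a2 a3 *v y))^2 = a1^2 * (y$1)^2 + a2^2 * (y$2)^2 + a3^2 * (y$3)^2"
  unfolding power2_norm_eq_inner
  by (simp add: inner_vec_def sum_3 matrix_vector_mult_def diag3_def power2_eq_square)
lemma norm2_3: "(norm (y::real^3))^2 = (y$1)^2 + (y$2)^2 + (y$3)^2"
  unfolding power2_norm_eq_inner by (simp add: inner_vec_def sum_3 power2_eq_square)
lemma dD: "det (diag3 a1 a2 a3) = a1 * a2 * a3"
    by (simp add: det_3 diag3_def)




lemma orth_norm:
  fixes Q :: mat3
  assumes "orthogonal_matrix Q"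
  shows "norm (Q *v x) = norm x"
proof -
  have "orthogonal_transformation ((*v) Q)"
    using assms orthogonal_transformation_matrix[of "(*v) Q"]
    by (simp add: matrix_of_matrix_vector_mul matrix_vector_mul_linear)
  then show ?thesis by (simp add: orthogonal_transformation_norm)
qed

lemma diag_bounds:
  assumes "a1 \<ge> a2" "a2 \<ge> a3" "a3 \<ge> 0"
  shows "norm (diag3 a1 a2 a3 *v y) \<le> a1 * norm y" "a3 * norm y \<le> norm (diag3 a1 a2 a3 *v y)"
proof -
  have z2: "0 \<le> a2" using assms by linarith
  have s1: "a2^2 \<le> a1^2" "a3^2 \<le> a2^2"
    using power_mono[OF assms(1) z2, of 2] power_mono[OF assms(2) assms(3), of 2] by auto
  have "(norm (diag3 a1 a2 a3 *v y))^2 \<le> (a1 * norm y)^2"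
  proof -
    have "a2^2 * (y$2)^2 \<le> a1^2 * (y$2)^2" "a3^2 * (y$3)^2 \<le> a1^2 * (y$3)^2"
      using mult_right_mono[OF s1(1), of "(y$2)^2"] mult_right_mono[OF order.trans[OF s1(2) s1(1)], of "(y$3)^2"]
      by auto
    moreover have "(a1 * norm y)^2 = a1^2 * (y$1)^2 + a1^2 * (y$2)^2 + a1^2 * (y$3)^2"
      unfolding power_mult_distrib norm2_3[of y] by (simp only: distrib_left)
    ultimately show ?thesis unfolding diag_norm2 by linarith
  qed
  then show "norm (diag3 a1 a2 a3 *v y) \<le> a1 * norm y"
    using assms by (metis power2_le_imp_le mult_nonneg_nonneg norm_ge_zero order.trans)
  have "(a3 * norm y)^2 \<le> (norm (diag3 a1 a2 a3 *v y))^2"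
  proof -
    have "a3^2 * (y$2)^2 \<le> a2^2 * (y$2)^2" "a3^2 * (y$1)^2 \<le> a1^2 * (y$1)^2"
      using mult_right_mono[OF s1(2), of "(y$2)^2"] mult_right_mono[OF order.trans[OF s1(2) s1(1)], of "(y$1)^2"]
      by auto
    moreover have "(a3 * norm y)^2 = a3^2 * (y$1)^2 + a3^2 * (y$2)^2 + a3^2 * (y$3)^2"
      unfolding power_mult_distrib norm2_3[of y] by (simp only: distrib_left)
    ultimately show ?thesis unfolding diag_norm2 by linarith
  qed
  then show "a3 * norm y \<le> norm (diag3 a1 a2 a3 *v y)"
    using power2_le_imp_le norm_ge_zero by blast
qed

lemma sv_props:
  fixes A :: mat3
  assumes dA: "det A \<noteq> 0" and sv: "sing_vals A = (a1,a2,a3)"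
  shows "a1 \<ge> a2" "a2 \<ge> a3" "a3 > 0" "a1 * a2 * a3 = \<bar>det A\<bar>"
    "\<And>x. norm (A *v x) \<le> a1 * norm x" "\<And>x. a3 * norm x \<le> norm (A *v x)"
    "\<exists>x. norm x = 1 \<and> norm (A *v x) = a1" "\<exists>x. norm x = 1 \<and> norm (A *v x) = a3"
proof -
  let ?P = "\<lambda>(a1, a2, a3). a1 \<ge> a2 \<and> a2 \<ge> a3 \<and> a3 \<ge> (0::real) \<and>
      (\<exists>U V. orthogonal_matrix U \<and> orthogonal_matrix V \<and> A = U ** diag3 a1 a2 a3 ** V)"
  have "\<exists>t. ?P t" using svd_exists[OF dA] by auto
  then have "?P (sing_vals A)" unfolding sing_vals_def by (rule someI_ex)
  then have P: "a1 \<ge> a2" "a2 \<ge> a3" "a3 \<ge> 0"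
     and "\<exists>U V. orthogonal_matrix U \<and> orthogonal_matrix V \<and> A = U ** diag3 a1 a2 a3 ** V"
    unfolding sv by auto
  then obtain U V where oU: "orthogonal_matrix U" and oV: "orthogonal_matrix V"
    and AU: "A = U ** diag3 a1 a2 a3 ** V" by blast
  show "a1 \<ge> a2" "a2 \<ge> a3" using P by auto
  have Ax: "norm (A *v x) = norm (diag3 a1 a2 a3 *v (V *v x))" for x
    unfolding AU by (simp add: matrix_vector_mul_assoc[symmetric] orth_norm[OF oU])
  show "norm (A *v x) \<le> a1 * norm x" for x
    unfolding Ax using diag_bounds(1)[OF P, of "V *v x"] orth_norm[OF oV] by simp
  show "a3 * norm x \<le> norm (A *v x)" for x
    unfolding Ax using diag_bounds(2)[OF P, of "V *v x"] orth_norm[OF oV] by simp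
  have "det A = det U * (a1 * a2 * a3) * det V"
    unfolding AU by (simp add: det_mul dD)
  then show dd: "a1 * a2 * a3 = \<bar>det A\<bar>"
    using det_orthogonal_matrix[OF oU] det_orthogonal_matrix[OF oV] P
    by (auto simp: abs_mult)
  show "a3 > 0"
  proof (rule ccontr)
    assume "\<not> a3 > 0"
    then have "a3 = 0" using P by simp
    then show False using dd dA by simp
  qed
  have VV: "V ** transpose V = mat 1" using oV by (simp add: orthogonal_matrix_def)
  have wit: "norm (transpose V *v axis k 1) = 1 \<and> norm (A *v (transpose V *v axis k 1)) = norm (diag3 a1 a2 a3 *v axis k 1)" for k
  proof
    have oVt: "orthogonal_matrix (transpose V)" using oV by simp
    show "norm (transpose V *v axis k 1) = 1" using orth_norm[OF oVt] by simp
    have e: "V *v (transpose V *v axis k 1) = axis k 1"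
      by (metis matrix_vector_mul_assoc VV matrix_vector_mul_lid)
    show "norm (A *v (transpose V *v axis k 1)) = norm (diag3 a1 a2 a3 *v axis k 1)"
      using Ax[of "transpose V *v axis k 1"] unfolding e .
  qed
  have d1: "diag3 a1 a2 a3 *v axis 1 1 = a1 *\<^sub>R axis 1 1"
    by (simp add: vec_eq_iff forall_3 matrix_vector_mult_def sum_3 diag3_def axis_def)
  have d3: "diag3 a1 a2 a3 *v axis 3 1 = a3 *\<^sub>R axis 3 1"
    by (simp add: vec_eq_iff forall_3 matrix_vector_mult_def sum_3 diag3_def axis_def)
  show "\<exists>x. norm x = 1 \<and> norm (A *v x) = a1"
    using wit[of 1] P unfolding d1 by auto
  show "\<exists>x. norm x = 1 \<and> norm (A *v x) = a3"
    using wit[of 3] P unfolding d3 by auto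
qed

definition Fphi :: "real \<Rightarrow> real \<Rightarrow> real \<Rightarrow> real \<Rightarrow> real" where
  "Fphi s x y z = (if s \<le> 1 then x powr s else if s \<le> 2 then x * y powr (s - 1) else z powr s)"

lemma phi_Fphi: "sing_vals A = (a1,a2,a3) \<Longrightarrow> phi s A = Fphi s (a2/a1) (a3/a1) (a2*a3/a1^2)"
  by (simp add: phi_def Fphi_def)

lemma Fphi_mono:
  assumes K: "K > 0" and s: "s \<ge> 0"
    and x: "0 \<le> x" "x \<le> K * x'" and y: "0 \<le> y" "y \<le> K * y'" and z: "0 \<le> z" "z \<le> K * z'"
    and nn: "0 \<le> x'" "0 \<le> y'" "0 \<le> z'"
  shows "Fphi s x y z \<le> K powr s * Fphi s x' y' z'"
proof -
  consider "s \<le> 1" | "\<not> s \<le> 1" "s \<le> 2" | "\<not> s \<le> 2" by linarith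
  then show ?thesis
  proof cases
    case 1
    have "x powr s \<le> (K * x') powr s" using x s by (simp add: powr_mono2)
    also have "\<dots> = K powr s * x' powr s" using K nn by (simp add: powr_mult)
    finally show ?thesis using 1 by (simp add: Fphi_def)
  next
    case 2
    have "y powr (s - 1) \<le> (K * y') powr (s - 1)" using y 2 by (simp add: powr_mono2)
    also have "\<dots> = K powr (s - 1) * y' powr (s - 1)" using K nn by (simp add: powr_mult)
    finally have yy: "y powr (s - 1) \<le> K powr (s - 1) * y' powr (s - 1)" .
    have "x * y powr (s - 1) \<le> (K * x') * (K powr (s - 1) * y' powr (s - 1))"
      using x yy by (intro mult_mono) auto
    also have "\<dots> = (K * K powr (s - 1)) * (x' * y' powr (s - 1))" by (simp add: algebra_simps)
    also have "K * K powr (s - 1) = K powr s"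
      using K by (simp add: powr_diff)
    finally show ?thesis using 2 by (simp add: Fphi_def)
  next
    case 3
    have "z powr s \<le> (K * z') powr s" using z s by (simp add: powr_mono2)
    also have "\<dots> = K powr s * z' powr s" using K nn by (simp add: powr_mult)
    finally show ?thesis using 3 by (simp add: Fphi_def)
  qed
qed

lemma phi_bound:
  fixes B M N :: mat3 and c s :: real
  assumes dB: "det B = 1" and dM: "det M = 1" and c1: "c \<ge> 1"
    and up: "\<And>x. norm (M *v x) \<le> c * norm x" and lo: "\<And>x. norm x \<le> c * norm (M *v x)"
    and MN: "M ** N = mat 1" and s: "s \<ge> 0"
  shows "phi s B \<le> (c^3) powr s * phi s (B ** M)"
proof -
  obtain a1 a2 a3 where sa: "sing_vals B = (a1,a2,a3)" by (cases "sing_vals B") auto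
  obtain b1 b2 b3 where sb: "sing_vals (B ** M) = (b1,b2,b3)" by (cases "sing_vals (B ** M)") auto
  have dBM: "det (B ** M) = 1" using dB dM by (simp add: det_mul)
  note A = sv_props[OF _ sa, unfolded dB] and Bp = sv_props[OF _ sb, unfolded dBM]
  have a12: "a1 \<ge> a2" "a2 \<ge> a3" "a3 > 0" "a1 * a2 * a3 = 1" using A by auto
  have b12: "b1 \<ge> b2" "b2 \<ge> b3" "b3 > 0" "b1 * b2 * b3 = 1" using Bp by auto
  have c0: "c > 0" using c1 by linarith
  have h1: "b1 \<le> c * a1"
  proof -
    obtain x where x: "norm x = 1" "norm ((B ** M) *v x) = b1" using Bp(7) by auto
    have "b1 = norm (B *v (M *v x))" using x by (simp add: matrix_vector_mul_assoc)
    also have "\<dots> \<le> a1 * norm (M *v x)" using A(5) by simp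
    also have "\<dots> \<le> a1 * c" using up[of x] x a12 by (intro mult_left_mono) auto
    finally show ?thesis by (simp add: mult.commute)
  qed
  have h2: "b3 \<le> c * a3"
  proof -
    obtain y where y: "norm y = 1" "norm (B *v y) = a3" using A(8) by auto
    define x where "x = N *v y"
    have Mx: "M *v x = y" unfolding x_def by (simp add: matrix_vector_mul_assoc MN)
    have "b3 * norm x \<le> norm ((B ** M) *v x)" using Bp(6) by simp
    also have "\<dots> = a3" using Mx y by (simp add: matrix_vector_mul_assoc[symmetric])
    finally have e1: "b3 * norm x \<le> a3" .
    have "1 \<le> c * norm x" using up[of x] Mx y by simp
    then have "b3 \<le> b3 * (c * norm x)" using b12 by (simp add: mult_le_cancel_left1)
    also have "\<dots> = c * (b3 * norm x)" by simp
    also have "\<dots> \<le> c * a3" using e1 c0 by (intro mult_left_mono) auto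
    finally show ?thesis .
  qed
  have h3: "a3 \<le> c * b3"
  proof -
    obtain z where z: "norm z = 1" "norm ((B ** M) *v z) = b3" using Bp(8) by auto
    have "a3 * norm (M *v z) \<le> norm (B *v (M *v z))" using A(6) by simp
    also have "\<dots> = b3" using z by (simp add: matrix_vector_mul_assoc)
    finally have e1: "a3 * norm (M *v z) \<le> b3" .
    have "1 \<le> c * norm (M *v z)" using lo[of z] z by simp
    then have "a3 \<le> a3 * (c * norm (M *v z))" using a12 by (simp add: mult_le_cancel_left1)
    also have "\<dots> = c * (a3 * norm (M *v z))" by simp
    also have "\<dots> \<le> c * b3" using e1 c0 by (intro mult_left_mono) auto
    finally show ?thesis .
  qed
  have a1p: "a1 > 0" and b1p: "b1 > 0" and a2p: "a2 > 0" and b2p: "b2 > 0" using a12 b12 by linarith+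
  have x: "a2 / a1 \<le> c^3 * (b2 / b1)"
  proof -
    have "a2 / a1 = 1 / (a1^2 * a3)" using a12 a1p by (simp add: field_simps power2_eq_square)
    also have "\<dots> \<le> 1 / ((b1 / c)^2 * (b3 / c))"
    proof (rule divide_left_mono)
      have "b1 / c \<le> a1" "b3 / c \<le> a3" using h1 h2 c0 by (simp_all add: divide_le_eq mult.commute)
      moreover have "b1 / c \<ge> 0" "b3 / c \<ge> 0" using b12 b1p c0 by auto
      ultimately show "(b1 / c)^2 * (b3 / c) \<le> a1^2 * a3"
        by (intro mult_mono power_mono) auto
      show "0 < a1\<^sup>2 * a3 * ((b1 / c)\<^sup>2 * (b3 / c))" using a1p a12 b1p b12 c0 by simp
    qed simp
    also have "\<dots> = c^3 * (1 / (b1^2 * b3))" using c0 by (simp add: field_simps power2_eq_square power3_eq_cube)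
    also have "1 / (b1^2 * b3) = b2 / b1" using b12 b1p by (simp add: field_simps power2_eq_square)
    finally show ?thesis .
  qed
  have y: "a3 / a1 \<le> c^3 * (b3 / b1)"
  proof -
    have "a3 / a1 \<le> (c * b3) / (b1 / c)"
      using h1 h3 a12 a1p b1p c0 by (intro frac_le) (auto simp: divide_le_eq mult.commute)
    also have "\<dots> = c^2 * (b3 / b1)" using c0 by (simp add: field_simps power2_eq_square)
    also have "\<dots> \<le> c^3 * (b3 / b1)"
      using c1 b12 b1p by (intro mult_right_mono) (auto simp: power_increasing)
    finally show ?thesis .
  qed
  have z: "a2 * a3 / a1^2 \<le> c^3 * (b2 * b3 / b1^2)"
  proof -
    have "a2 * a3 / a1^2 = 1 / a1^3" using a12 a1p by (simp add: field_simps power2_eq_square power3_eq_cube)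
    also have "\<dots> \<le> 1 / (b1 / c)^3"
    proof (rule divide_left_mono)
      have "b1 / c \<le> a1" using h1 c0 by (simp_all add: divide_le_eq mult.commute)
      then show "(b1 / c)^3 \<le> a1^3" using b1p c0 by (intro power_mono) auto
    qed (use a1p b1p c0 in auto)
    also have "\<dots> = c^3 * (b2 * b3 / b1^2)" using c0 b12 b1p by (simp add: field_simps power2_eq_square power3_eq_cube)
    finally show ?thesis .
  qed
  show ?thesis
    unfolding phi_Fphi[OF sa] phi_Fphi[OF sb]
    by (rule Fphi_mono[OF _ s _ x _ y _ z]) (use a12 a1p b12 b1p c0 in auto)
qed

lemma sum_le_infsum_enn:
  fixes f :: "'a \<Rightarrow> ennreal"
  assumes "finite F" "F \<subseteq> A"
  shows "sum f F \<le> infsum f A"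
proof -
  have "infsum f F \<le> infsum f A"
    by (rule infsum_mono_neutral) (use assms in \<open>auto intro: nonneg_summable_on_complete\<close>)
  then show ?thesis using assms by simp
qed

lemma infsum_mono_set_enn:
  fixes f :: "'a \<Rightarrow> ennreal"
  assumes "A \<subseteq> B"
  shows "infsum f A \<le> infsum f B"
  by (rule infsum_mono_neutral) (use assms in \<open>auto intro: nonneg_summable_on_complete\<close>)

lemma infsum_cmult_le_enn:
  fixes f :: "'a \<Rightarrow> ennreal"
  shows "infsum (\<lambda>x. c * f x) A \<le> c * infsum f A"
proof -
  have "infsum (\<lambda>x. c * f x) A = (SUP F\<in>{F. finite F \<and> F \<subseteq> A}. sum (\<lambda>x. c * f x) F)"
    by (rule nonneg_infsum_complete) simp
  also have "\<dots> \<le> c * infsum f A"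
  proof (rule SUP_least)
    fix F assume "F \<in> {F. finite F \<and> F \<subseteq> A}"
    then have "sum f F \<le> infsum f A" using sum_le_infsum_enn by blast
    then show "sum (\<lambda>x. c * f x) F \<le> c * infsum f A"
      by (simp add: sum_distrib_left[symmetric] mult_left_mono)
  qed
  finally show ?thesis .
qed

lemma infsum_nat_UN_enn:
  fixes f :: "'a \<Rightarrow> ennreal" and B :: "nat \<Rightarrow> 'a set"
  assumes dj: "disjoint_family B"
  shows "infsum f (\<Union>n. B n) = (\<Sum>n. infsum f (B n))"
proof (rule antisym)
  have part: "(\<Sum>i<n. infsum f (B i)) = infsum f (\<Union>i<n. B i)" for n
  proof (induction n)
    case 0 then show ?case by simp
  next
    case (Suc n)
    have "(\<Union>i<Suc n. B i) = (\<Union>i<n. B i) \<union> B n" by (auto simp: lessThan_Suc)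
    moreover have "(\<Union>i<n. B i) \<inter> B n = {}"
    proof -
      have "B i \<inter> B n = {}" if "i < n" for i using dj that by (simp add: disjoint_family_on_def)
      then show ?thesis by blast
    qed
    ultimately have "infsum f (\<Union>i<Suc n. B i) = infsum f (\<Union>i<n. B i) + infsum f (B n)"
      by (simp only:) (intro infsum_Un_disjoint; auto intro: nonneg_summable_on_complete)
    then show ?case using Suc by simp
  qed
  show "(\<Sum>n. infsum f (B n)) \<le> infsum f (\<Union>n. B n)"
  proof (rule suminf_le_const)
    show "summable (\<lambda>n. infsum f (B n))" by simp
    fix n
    show "(\<Sum>i<n. infsum f (B i)) \<le> infsum f (\<Union>n. B n)"
      unfolding part by (rule infsum_mono_set_enn) auto
  qed
  have "infsum f (\<Union>n. B n) = (SUP F\<in>{F. finite F \<and> F \<subseteq> (\<Union>n. B n)}. sum f F)"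
    by (rule nonneg_infsum_complete) simp
  also have "\<dots> \<le> (\<Sum>n. infsum f (B n))"
  proof (rule SUP_least)
    fix F assume F: "F \<in> {F. finite F \<and> F \<subseteq> (\<Union>n. B n)}"
    then have fin: "finite F" and sub: "F \<subseteq> (\<Union>n. B n)" by auto
    have "\<forall>x\<in>F. \<exists>n. x \<in> B n" using sub by auto
    then obtain idx where idx: "\<And>x. x \<in> F \<Longrightarrow> x \<in> B (idx x)" by metis
    define N where "N = Suc (Max (insert 0 (idx ` F)))"
    have "idx x < N" if "x \<in> F" for x
      using that fin by (auto simp: N_def less_Suc_eq_le)
    then have "F \<subseteq> (\<Union>i<N. B i)" using idx by blast
    then have "sum f F \<le> infsum f (\<Union>i<N. B i)" using fin by (rule sum_le_infsum_enn[rotated])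
    also have "\<dots> = (\<Sum>i<N. infsum f (B i))" by (simp add: part)
    also have "\<dots> \<le> (\<Sum>n. infsum f (B n))" by (rule sum_le_suminf) auto
    finally show "sum f F \<le> (\<Sum>n. infsum f (B n))" .
  qed
  finally show "infsum f (\<Union>n. B n) \<le> (\<Sum>n. infsum f (B n))" .
qed

definition gw :: "real \<Rightarrow> mat3 list \<Rightarrow> ennreal" where
  "gw s ws = ennreal (phi s (word_prod ws))"

definition Wd :: "mat3 set \<Rightarrow> mat3 list set" where
  "Wd X = {ws. ws \<noteq> [] \<and> set ws \<subseteq> X}"

lemma zeta_Wd: "zeta X s = infsum (gw s) (Wd X)"
proof -
  define B where "B n = {ws. length ws = Suc n \<and> set ws \<subseteq> X}" for n
  have "Wd X = (\<Union>n. B n)"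
  proof (rule set_eqI)
    fix x show "x \<in> Wd X \<longleftrightarrow> x \<in> (\<Union>n. B n)"
      unfolding Wd_def B_def by (cases x) auto
  qed
  moreover have "disjoint_family B" unfolding disjoint_family_on_def B_def by auto
  ultimately show ?thesis
    unfolding zeta_def gw_def B_def by (simp add: infsum_nat_UN_enn)
qed

lemma wp_Nil[simp]: "word_prod [] = mat 1" by (simp add: word_prod_def)
lemma wp_Cons[simp]: "word_prod (x # xs) = x ** word_prod xs" by (simp add: word_prod_def)
lemma wp_append: "word_prod (xs @ ys) = word_prod xs ** word_prod ys"
  by (induction xs) (simp_all add: matrix_mul_assoc)
lemma wp_replicate: "word_prod (replicate n A) = mpow A n"
  by (induction n) (simp_all add: mpow_0 mpow_Suc)

lemma det_A: "det A1 = 1" "det A2 = 1" "det A3 = 1"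
  by (simp_all add: det_3 A1_def A2_def A3_def)

lemma det_wp: "set ws \<subseteq> A_R \<Longrightarrow> det (word_prod ws) = 1"
  by (induction ws) (auto simp: det_mul A_R_def det_A)

lemma Amat_in: "i \<in> {1,2,3} \<Longrightarrow> Amat i \<in> A_R"
  by (auto simp: Amat_def A_R_def)

lemma A_R_Amat: "x \<in> A_R \<Longrightarrow> \<exists>i\<in>{1,2,3}. x = Amat i"
  by (auto simp: Amat_def A_R_def)

lemma A_distinct: "A1 \<noteq> A2" "A1 \<noteq> A3" "A2 \<noteq> A3"
  by (simp_all add: A1_def A2_def A3_def vec_eq_iff forall_3)

lemma Amat_inj: "i \<in> {1,2,3} \<Longrightarrow> j \<in> {1,2,3} \<Longrightarrow> Amat i = Amat j \<Longrightarrow> i = j"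
  using A_distinct by (auto simp: Amat_def)

definition blk :: "nat \<times> nat \<times> nat \<Rightarrow> mat3 list" where
  "blk t = (case t of (i,j,n) \<Rightarrow> replicate n (Amat i) @ [Amat j])"

lemma wp_blk: "word_prod (blk t) = Mt t"
  by (cases t) (simp add: blk_def Mt_def wp_append wp_replicate)

definition rep :: "mat3 \<Rightarrow> mat3 list" where "rep g = blk (Rec g)"

lemma rep_Mt: "t \<in> T \<Longrightarrow> rep (Mt t) = blk t"
  by (simp add: rep_def Rec_Mt)

lemma wp_rep: "g \<in> Gamma \<Longrightarrow> word_prod (rep g) = g"
  by (auto simp: Gamma_eq rep_Mt wp_blk)

lemma rep_ne: "rep g \<noteq> []" by (simp add: rep_def blk_def split: prod.splits)

lemma Mt_Gamma: "t \<in> T \<Longrightarrow> Mt t \<in> Gamma" by (simp add: Gamma_eq)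

lemma set_blk: "t \<in> T \<Longrightarrow> set (blk t) \<subseteq> A_R"
  by (auto simp: blk_def T_def Amat_in)

lemma set_rep: "g \<in> Gamma \<Longrightarrow> set (rep g) \<subseteq> A_R"
proof -
  assume "g \<in> Gamma"
  then obtain t where "t \<in> T" "g = Mt t" by (auto simp: Gamma_eq)
  then show ?thesis using set_blk rep_Mt by simp
qed

definition flat :: "mat3 list \<Rightarrow> mat3 list" where "flat gs = concat (map rep gs)"

lemma flat_Nil[simp]: "flat [] = []" and flat_Cons[simp]: "flat (g # gs) = rep g @ flat gs"
  and flat_append: "flat (xs @ ys) = flat xs @ flat ys"
  by (simp_all add: flat_def)

lemma wp_flat: "set gs \<subseteq> Gamma \<Longrightarrow> word_prod (flat gs) = word_prod gs"
  by (induction gs) (simp_all add: wp_append wp_rep)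

lemma set_flat: "set gs \<subseteq> Gamma \<Longrightarrow> set (flat gs) \<subseteq> A_R"
  by (induction gs) (use set_rep in auto)

lemma flat_Nil_iff: "flat gs = [] \<longleftrightarrow> gs = []"
  by (cases gs) (simp_all add: rep_ne)

lemma rep_pref:
  "a \<noteq> b \<Longrightarrow> a \<noteq> b' \<Longrightarrow> replicate n a @ b # r = replicate n' a @ b' # r' \<Longrightarrow> n = n' \<and> b = b' \<and> r = r'"
proof (induction n arbitrary: n')
  case 0 then show ?case by (cases n') auto
next
  case (Suc n) then show ?case by (cases n') auto
qed

lemma blk_pref:
  assumes "t \<in> T" "t' \<in> T" "blk t @ r = blk t' @ r'"
  shows "t = t' \<and> r = r'"
proof -
  obtain i j n where t: "t = (i,j,n)" by (cases t) auto
  obtain i' j' n' where t': "t' = (i',j',n')" by (cases t') auto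
  have T1: "i \<in> {1,2,3}" "j \<in> {1,2,3}" "i \<noteq> j" "n \<ge> 1" using assms(1) t by (auto simp: T_def)
  have T2: "i' \<in> {1,2,3}" "j' \<in> {1,2,3}" "i' \<noteq> j'" "n' \<ge> 1" using assms(2) t' by (auto simp: T_def)
  have e: "replicate n (Amat i) @ Amat j # r = replicate n' (Amat i') @ Amat j' # r'"
    using assms(3) by (simp add: t t' blk_def)
  obtain n0 where n0: "n = Suc n0" using T1(4) by (cases n) auto
  obtain n0' where n0': "n' = Suc n0'" using T2(4) by (cases n') auto
  have "Amat i = Amat i'" using e unfolding n0 n0' by simp
  then have ii: "i = i'" by (rule Amat_inj[OF T1(1) T2(1)])
  have neq1: "Amat i \<noteq> Amat j"
  proof
    assume "Amat i = Amat j" then have "i = j" by (rule Amat_inj[OF T1(1) T1(2)])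
    with T1(3) show False by simp
  qed
  have neq2: "Amat i \<noteq> Amat j'"
  proof
    assume "Amat i = Amat j'" then have "i' = j'" unfolding ii by (rule Amat_inj[OF T2(1) T2(2)])
    with T2(3) show False by simp
  qed
  have e2: "replicate n (Amat i) @ Amat j # r = replicate n' (Amat i) @ Amat j' # r'"
    using e ii by simp
  have nn: "n = n' \<and> Amat j = Amat j' \<and> r = r'" by (rule rep_pref[OF neq1 neq2 e2])
  have "j = j'" using Amat_inj[OF T1(2) T2(2)] nn by blast
  then show ?thesis using nn ii t t' by simp
qed

lemma flat_inj: "set gs \<subseteq> Gamma \<Longrightarrow> set gs' \<subseteq> Gamma \<Longrightarrow> flat gs = flat gs' \<Longrightarrow> gs = gs'"
proof (induction gs arbitrary: gs')
  case Nil then show ?case by (metis flat_Nil_iff)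
next
  case (Cons g gs)
  have "gs' \<noteq> []"
  proof
    assume "gs' = []"
    then have "flat (g # gs) = []" using Cons.prems(3) by simp
    then show False by (simp only: flat_Nil_iff) simp
  qed
  then obtain g' gs'' where gs': "gs' = g' # gs''" by (cases gs') auto
  have gG: "g \<in> Gamma" using Cons.prems(1) by simp
  have gG': "g' \<in> Gamma" using Cons.prems(2) gs' by simp
  obtain t where t: "t \<in> T" "g = Mt t" using gG unfolding Gamma_eq by blast
  obtain t' where t': "t' \<in> T" "g' = Mt t'" using gG' unfolding Gamma_eq by blast
  have "rep g @ flat gs = rep g' @ flat gs''" using Cons.prems(3) gs' by simp
  then have "blk t @ flat gs = blk t' @ flat gs''" using rep_Mt t t' by simp
  then have tt: "t = t'" and ff: "flat gs = flat gs''" using blk_pref[OF t(1) t'(1)] by blast+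
  have "gs = gs''" using Cons.IH[OF _ _ ff] Cons.prems gs' by simp
  then show ?case using gs' t t' tt by simp
qed

lemma decomp:
  "set w \<subseteq> A_R \<Longrightarrow> \<exists>gs r. set gs \<subseteq> Gamma \<and> w = flat gs @ r \<and>
      (r = [] \<or> (\<exists>i m. i \<in> {1,2,3} \<and> m \<ge> 1 \<and> r = replicate m (Amat i)))"
proof (induction w rule: rev_induct)
  case Nil then show ?case by (intro exI[of _ "[]"]) auto
next
  case (snoc x w)
  then obtain gs r where gs: "set gs \<subseteq> Gamma" "w = flat gs @ r"
    and r: "r = [] \<or> (\<exists>i m. i \<in> {1,2,3} \<and> m \<ge> 1 \<and> r = replicate m (Amat i))" by auto
  obtain k where k: "k \<in> {1,2,3}" "x = Amat k" using snoc.prems A_R_Amat by auto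
  show ?case
  proof (cases "r = []")
    case True
    have "\<exists>i m. i \<in> {1,2,3} \<and> m \<ge> 1 \<and> [x] = replicate m (Amat i)"
      using k by (intro exI[of _ k] exI[of _ 1]) auto
    then show ?thesis using gs True
      by (intro exI[of _ gs] exI[of _ "[x]"]) auto
  next
    case False
    then obtain i m where im: "i \<in> {1,2,3}" "m \<ge> 1" "r = replicate m (Amat i)" using r by auto
    show ?thesis
    proof (cases "k = i")
      case True
      have e: "w @ [x] = flat gs @ replicate (Suc m) (Amat i)"
        using gs k im True by (simp add: replicate_append_same)
      have "\<exists>i' m'. i' \<in> {1,2,3} \<and> m' \<ge> 1 \<and> replicate (Suc m) (Amat i) = replicate m' (Amat i')"
        using im by (intro exI[of _ i] exI[of _ "Suc m"]) auto
      then show ?thesis using gs e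
        by (intro exI[of _ gs] exI[of _ "replicate (Suc m) (Amat i)"]) auto
    next
      case False
      have tT: "(i,k,m) \<in> T" using False im k by (auto simp: T_def)
      have "flat (gs @ [Mt (i,k,m)]) = w @ [x]"
        using gs im k tT by (simp add: flat_append rep_Mt blk_def)
      then show ?thesis using gs Mt_Gamma[OF tT]
        by (intro exI[of _ "gs @ [Mt (i,k,m)]"] exI[of _ "[]"]) auto
    qed
  qed
qed

lemma sq3: "((a::real) + b + c)^2 \<le> 3 * (a^2 + b^2 + c^2)"
proof -
  have "0 \<le> (a-b)^2 + (b-c)^2 + (a-c)^2" by simp
  then show ?thesis by (simp add: power2_eq_square algebra_simps)
qed

lemma norm_le2: "(norm (y::real^3))^2 \<le> 4 * (norm x)^2 \<Longrightarrow> norm y \<le> 2 * norm x"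
  by (rule power2_le_imp_le) (simp_all add: power_mult_distrib)

lemma A1v: "A1 *v x = vector [x$1 + x$2 + x$3, x$2, x$3]"
  by (simp add: vec_eq_iff forall_3 A1_def matrix_vector_mult_def sum_3)
lemma A2v: "A2 *v x = vector [x$1, x$1 + x$2 + x$3, x$3]"
  by (simp add: vec_eq_iff forall_3 A2_def matrix_vector_mult_def sum_3)

lemma lin1: "(S::real) \<le> 3*(p+q+r) \<Longrightarrow> 0 \<le> p \<Longrightarrow> S + q + r \<le> 4*(p+q+r)" by (simp add: algebra_simps)
lemma lin1b: "(S::real) \<le> 3*(p+q+r) \<Longrightarrow> 0 \<le> q \<Longrightarrow> p + S + r \<le> 4*(p+q+r)" by (simp add: algebra_simps)
lemma lin2: "(P::real) \<le> 3*(S+q+r) \<Longrightarrow> 0 \<le> S \<Longrightarrow> P + q + r \<le> 4*(S+q+r)" by (simp add: algebra_simps)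
lemma lin2b: "(P::real) \<le> 3*(S+p+r) \<Longrightarrow> 0 \<le> S \<Longrightarrow> p + P + r \<le> 4*(p+S+r)" by (simp add: algebra_simps)

lemma A1_up: "norm (A1 *v x) \<le> 2 * norm x"
proof (rule norm_le2)
  show "(norm (A1 *v x))^2 \<le> 4 * (norm x)^2"
    unfolding norm2_3 A1v vector_3 by (rule lin1[OF sq3 zero_le_power2])
qed
lemma A2_up: "norm (A2 *v x) \<le> 2 * norm x"
proof (rule norm_le2)
  show "(norm (A2 *v x))^2 \<le> 4 * (norm x)^2"
    unfolding norm2_3 A2v vector_3 by (rule lin1b[OF sq3 zero_le_power2])
qed
lemma A1_lo: "norm x \<le> 2 * norm (A1 *v x)"
proof (rule norm_le2)
  have "(x$1)^2 \<le> 3 * ((x$1 + x$2 + x$3)^2 + (x$2)^2 + (x$3)^2)"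
    using sq3[of "x$1 + x$2 + x$3" "- x$2" "- x$3"] by simp
  then show "(norm x)^2 \<le> 4 * (norm (A1 *v x))^2"
    unfolding norm2_3 A1v vector_3 by (rule lin2[OF _ zero_le_power2])
qed
lemma A2_lo: "norm x \<le> 2 * norm (A2 *v x)"
proof (rule norm_le2)
  have "(x$2)^2 \<le> 3 * ((x$1 + x$2 + x$3)^2 + (x$1)^2 + (x$3)^2)"
    using sq3[of "x$1 + x$2 + x$3" "- x$1" "- x$3"] by simp
  then show "(norm x)^2 \<le> 4 * (norm (A2 *v x))^2"
    unfolding norm2_3 A2v vector_3 by (rule lin2b[OF _ zero_le_power2])
qed

lemma A1_inv: "A1 ** vector [vector [1,-1,-1], vector [0,1,0], vector [0,0,1]] = mat 1"
  by (simp add: vec_eq_iff forall_3 A1_def matrix_matrix_mult_def sum_3 mat_def)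
lemma A2_inv: "A2 ** vector [vector [1,0,0], vector [-1,1,-1], vector [0,0,1]] = mat 1"
  by (simp add: vec_eq_iff forall_3 A2_def matrix_matrix_mult_def sum_3 mat_def)

definition nx :: "nat \<Rightarrow> nat" where "nx i = (if i = 1 then 2 else 1)"

lemma phi_step:
  assumes "set w \<subseteq> A_R" "s \<ge> 0"
  shows "phi s (word_prod w) \<le> 8 powr s * phi s (word_prod w ** Amat (nx i))"
proof -
  have dB: "det (word_prod w) = 1" using det_wp assms by simp
  show ?thesis
  proof (cases "i = 1")
    case True
    then have "Amat (nx i) = A2" by (simp add: nx_def Amat_def)
    then show ?thesis
      using phi_bound[OF dB det_A(2) _ A2_up A2_lo A2_inv assms(2)] by simp
  next
    case False
    then have "Amat (nx i) = A1" by (simp add: nx_def Amat_def)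
    then show ?thesis
      using phi_bound[OF dB det_A(1) _ A1_up A1_lo A1_inv assms(2)] by simp
  qed
qed

definition WA :: "mat3 list set" where "WA = Wd A_R"
definition WG :: "mat3 list set" where "WG = Wd Gamma"
definition Comp :: "mat3 list set" where "Comp = flat ` WG"
definition Inc :: "mat3 list set" where "Inc = WA - Comp"

lemma Comp_sub: "Comp \<subseteq> WA"
  unfolding Comp_def WA_def WG_def Wd_def using set_flat flat_Nil_iff by auto

lemma flat_inj_on: "inj_on flat WG"
  unfolding WG_def Wd_def by (rule inj_onI) (use flat_inj in auto)

lemma Inc_decomp:
  assumes "w \<in> Inc"
  shows "\<exists>gs i m. set gs \<subseteq> Gamma \<and> i \<in> {1,2,3} \<and> m \<ge> 1 \<and> w = flat gs @ replicate m (Amat i)"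
proof -
  have w: "w \<noteq> []" "set w \<subseteq> A_R" "w \<notin> Comp" using assms by (auto simp: Inc_def WA_def Wd_def)
  obtain gs r where gs: "set gs \<subseteq> Gamma" "w = flat gs @ r"
    and r: "r = [] \<or> (\<exists>i m. i \<in> {1,2,3} \<and> m \<ge> 1 \<and> r = replicate m (Amat i))"
    using decomp[OF w(2)] by blast
  have "r \<noteq> []"
  proof
    assume r0: "r = []"
    then have "gs \<noteq> []" using gs w(1) by auto
    then have "gs \<in> WG" using gs by (simp add: WG_def Wd_def)
    then have "w \<in> Comp" using gs r0 by (simp add: Comp_def)
    then show False using w(3) by simp
  qed
  then show ?thesis using gs r by blast
qed

definition ext :: "mat3 list \<Rightarrow> mat3 list" where
  "ext w = (SOME gs'. \<exists>gs i m. set gs \<subseteq> Gamma \<and> i \<in> {1,2,3} \<and> m \<ge> 1 \<and>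
      w = flat gs @ replicate m (Amat i) \<and> gs' = gs @ [Mt (i, nx i, m)])"

lemma ext_props:
  assumes "w \<in> Inc"
  shows "\<exists>gs i m. set gs \<subseteq> Gamma \<and> i \<in> {1,2,3} \<and> m \<ge> 1 \<and>
      w = flat gs @ replicate m (Amat i) \<and> ext w = gs @ [Mt (i, nx i, m)]"
proof -
  obtain gs i m where "set gs \<subseteq> Gamma \<and> i \<in> {1,2,3} \<and> m \<ge> 1 \<and> w = flat gs @ replicate m (Amat i)"
    using Inc_decomp[OF assms] by blast
  then have "\<exists>gs'. \<exists>gs i m. set gs \<subseteq> Gamma \<and> i \<in> {1,2,3} \<and> m \<ge> 1 \<and>
      w = flat gs @ replicate m (Amat i) \<and> gs' = gs @ [Mt (i, nx i, m)]" by blast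
  from someI_ex[OF this] show ?thesis unfolding ext_def by blast
qed

lemma nxT: "i \<in> {1,2,3} \<Longrightarrow> m \<ge> 1 \<Longrightarrow> (i, nx i, m) \<in> T"
  by (auto simp: T_def nx_def)

lemma ext_WG: "w \<in> Inc \<Longrightarrow> ext w \<in> WG"
  using ext_props[of w] Mt_Gamma[OF nxT] by (fastforce simp: WG_def Wd_def)

lemma ext_inj: "inj_on ext Inc"
proof (rule inj_onI)
  fix w w' assume w: "w \<in> Inc" and w': "w' \<in> Inc" and e: "ext w = ext w'"
  obtain gs i m where A: "set gs \<subseteq> Gamma" "i \<in> {1,2,3}" "m \<ge> 1"
      "w = flat gs @ replicate m (Amat i)" "ext w = gs @ [Mt (i, nx i, m)]"
    using ext_props[OF w] by blast
  obtain gs' i' m' where B: "set gs' \<subseteq> Gamma" "i' \<in> {1,2,3}" "m' \<ge> 1"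
      "w' = flat gs' @ replicate m' (Amat i')" "ext w' = gs' @ [Mt (i', nx i', m')]"
    using ext_props[OF w'] by blast
  have "gs @ [Mt (i, nx i, m)] = gs' @ [Mt (i', nx i', m')]" using A(5) B(5) e by simp
  then have g: "gs = gs'" and me: "Mt (i, nx i, m) = Mt (i', nx i', m')" by simp_all
  have "(i, nx i, m) = (i', nx i', m')"
    by (rule inj_onD[OF Mt_inj me nxT[OF A(2) A(3)] nxT[OF B(2) B(3)]])
  then show "w = w'" using A(4) B(4) g by simp
qed

lemma ext_bound:
  assumes "w \<in> Inc" "s \<ge> 0"
  shows "gw s w \<le> ennreal (8 powr s) * gw s (ext w)"
proof -
  obtain gs i m where A: "set gs \<subseteq> Gamma" "i \<in> {1,2,3}" "m \<ge> 1"
      "w = flat gs @ replicate m (Amat i)" "ext w = gs @ [Mt (i, nx i, m)]"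
    using ext_props[OF assms(1)] by blast
  have sw: "set w \<subseteq> A_R" using assms(1) by (simp add: Inc_def WA_def Wd_def)
  have "word_prod (ext w) = word_prod gs ** (mpow (Amat i) m ** Amat (nx i))"
    using A(5) by (simp add: wp_append Mt_def)
  also have "\<dots> = (word_prod (flat gs) ** mpow (Amat i) m) ** Amat (nx i)"
    using A(1) by (simp add: wp_flat matrix_mul_assoc)
  also have "word_prod (flat gs) ** mpow (Amat i) m = word_prod w"
    using A(4) by (simp add: wp_append wp_replicate)
  finally have we: "word_prod (ext w) = word_prod w ** Amat (nx i)" .
  have "phi s (word_prod w) \<le> 8 powr s * phi s (word_prod (ext w))"
    unfolding we by (rule phi_step[OF sw assms(2)])
  then have "ennreal (phi s (word_prod w)) \<le> ennreal (8 powr s * phi s (word_prod (ext w)))"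
    by (rule ennreal_leI)
  then show ?thesis by (simp add: gw_def ennreal_mult')
qed

lemma Z_le: "infsum (gw s) WG \<le> infsum (gw s) WA"
proof -
  have "infsum (gw s) WG = infsum (gw s \<circ> flat) WG"
    by (rule infsum_cong) (auto simp: WG_def Wd_def gw_def wp_flat)
  also have "\<dots> = infsum (gw s) Comp"
    unfolding Comp_def by (rule infsum_reindex[OF flat_inj_on, symmetric])
  also have "\<dots> \<le> infsum (gw s) WA" by (rule infsum_mono_set_enn[OF Comp_sub])
  finally show ?thesis .
qed

lemma Z_ge:
  assumes "s \<ge> 0"
  shows "infsum (gw s) WA \<le> infsum (gw s) WG + ennreal (8 powr s) * infsum (gw s) WG"
proof -
  have WAu: "WA = Comp \<union> Inc" using Comp_sub by (auto simp: Inc_def)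
  have "infsum (gw s) WA = infsum (gw s) Comp + infsum (gw s) Inc"
    unfolding WAu by (intro infsum_Un_disjoint) (auto simp: Inc_def intro: nonneg_summable_on_complete)
  also have "infsum (gw s) Comp = infsum (gw s) WG"
  proof -
    have "infsum (gw s) WG = infsum (gw s \<circ> flat) WG"
      by (rule infsum_cong) (auto simp: WG_def Wd_def gw_def wp_flat)
    also have "\<dots> = infsum (gw s) Comp"
      unfolding Comp_def by (rule infsum_reindex[OF flat_inj_on, symmetric])
    finally show ?thesis by simp
  qed
  also have "infsum (gw s) Inc \<le> ennreal (8 powr s) * infsum (gw s) WG"
  proof -
    have "infsum (gw s) Inc \<le> infsum (\<lambda>w. ennreal (8 powr s) * (gw s \<circ> ext) w) Inc"
      by (rule infsum_mono) (auto intro: nonneg_summable_on_complete ext_bound[OF _ assms])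
    also have "\<dots> \<le> ennreal (8 powr s) * infsum (gw s \<circ> ext) Inc"
      by (rule infsum_cmult_le_enn)
    also have "infsum (gw s \<circ> ext) Inc = infsum (gw s) (ext ` Inc)"
      by (rule infsum_reindex[OF ext_inj, symmetric])
    also have "\<dots> \<le> infsum (gw s) WG"
      by (rule infsum_mono_set_enn) (use ext_WG in auto)
    finally show ?thesis by (simp add: mult_left_mono)
  qed
  finally show ?thesis by (simp add: add_left_mono)
qed

lemma fin_iff:
  assumes "s \<ge> 0"
  shows "zeta A_R s < \<infinity> \<longleftrightarrow> zeta Gamma s < \<infinity>"
proof -
  have zA: "zeta A_R s = infsum (gw s) WA" by (simp add: zeta_Wd WA_def)
  have zG: "zeta Gamma s = infsum (gw s) WG" by (simp add: zeta_Wd WG_def)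
  show ?thesis
  proof
    assume "zeta A_R s < \<infinity>"
    then show "zeta Gamma s < \<infinity>" using Z_le[of s] zA zG by (metis order.strict_trans1)
  next
    assume G: "zeta Gamma s < \<infinity>"
    have "ennreal (8 powr s) * infsum (gw s) WG < \<infinity>"
      using G zG by (simp add: ennreal_mult_less_top)
    then have "infsum (gw s) WG + ennreal (8 powr s) * infsum (gw s) WG < \<infinity>"
      using G zG by simp
    then show "zeta A_R s < \<infinity>" using Z_ge[OF assms] zA by (metis order.strict_trans1)
  qed
qed

theorem lemma6p7:
  shows "crit_exp A_R = crit_exp Gamma"
proof -
  have "{ereal s | s. s \<ge> 0 \<and> zeta A_R s < \<infinity>} = {ereal s | s. s \<ge> 0 \<and> zeta Gamma s < \<infinity>}"
    using fin_iff by blast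
  then show ?thesis unfolding crit_exp_def by simp
qed

end
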